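(* $\mathcal{A}(\bm{p})$ is a coherent ring: every finitely generated ideal $I$ of $\mathcal{A}(\bm{p})$ is finitely presented, i.e. there is an exact sequence of $\mathcal{A}(\bm{p})$-modules $0\to K\to F\to I\to0$ with $F$ finitely generated free and $K$ finitely generated.
   Context: Fix $\bm{p}:\mathbb{N}_0\to(0,\infty)$ with $\lim_{n\to\infty}\bm{p}(n)^{1/n}=\infty$. For an entire function $f$ write $f(z)=\sum_{n\ge0}\widehat f(n)z^n$. $\mathcal{A}(\bm{p})$ is the set of entire functions $f$ with $\sup_{n\ge 0}\bm{p}(n)|\widehat f(n)|<\infty$, with pointwise addition and scalar multiplication and the weighted Hadamard product $(f\ast g)(z)=\sum_{n\ge0}\bm{p}(n)\widehat f(n)\widehat g(n)z^n$; it is a commutative unital ring with unit $\varepsilon(z)=\sum_{n\ge0}\frac{z^n}{\bm{p}(n)}$. *)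

theory Defs
  imports "HOL-Complex_Analysis.Complex_Analysis" "HOL-Library.Function_Algebras"
begin

definition tcoeff :: "(complex \<Rightarrow> complex) \<Rightarrow> nat \<Rightarrow> complex" where
  "tcoeff f n = (deriv ^^ n) f 0 / of_nat (fact n)"

definition Ap :: "(nat \<Rightarrow> real) \<Rightarrow> (complex \<Rightarrow> complex) set" where
  "Ap p = {f. f holomorphic_on UNIV \<and> bdd_above (range (\<lambda>n. p n * norm (tcoeff f n)))}"

definition Amult :: "(nat \<Rightarrow> real) \<Rightarrow> (complex \<Rightarrow> complex) \<Rightarrow> (complex \<Rightarrow> complex) \<Rightarrow> (complex \<Rightarrow> complex)" where
  "Amult p f g = (\<lambda>z. \<Sum>n. of_real (p n) * tcoeff f n * tcoeff g n * z ^ n)"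

definition Ap_ideal :: "(nat \<Rightarrow> real) \<Rightarrow> (complex \<Rightarrow> complex) set \<Rightarrow> bool" where
  "Ap_ideal p I \<longleftrightarrow> I \<subseteq> Ap p \<and> 0 \<in> I \<and> (\<forall>f\<in>I. \<forall>g\<in>I. f + g \<in> I) \<and> (\<forall>f\<in>I. - f \<in> I)
     \<and> (\<forall>r\<in>Ap p. \<forall>f\<in>I. Amult p r f \<in> I)"

definition lincomb :: "(nat \<Rightarrow> real) \<Rightarrow> (complex \<Rightarrow> complex) list \<Rightarrow> (complex \<Rightarrow> complex) list \<Rightarrow> (complex \<Rightarrow> complex)" where
  "lincomb p rs gs = (\<Sum>i<length gs. Amult p (rs ! i) (gs ! i))"

definition Ap_span :: "(nat \<Rightarrow> real) \<Rightarrow> (complex \<Rightarrow> complex) list \<Rightarrow> (complex \<Rightarrow> complex) set" where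
  "Ap_span p gs = {lincomb p rs gs | rs. length rs = length gs \<and> set rs \<subseteq> Ap p}"

definition fg_ideal :: "(nat \<Rightarrow> real) \<Rightarrow> (complex \<Rightarrow> complex) set \<Rightarrow> bool" where
  "fg_ideal p I \<longleftrightarrow> Ap_ideal p I \<and> (\<exists>gs. set gs \<subseteq> Ap p \<and> I = Ap_span p gs)"

text \<open>Kernel K of the surjection A(p)^n \<rightarrow> I, e_i \<mapsto> gs!i (tuples as lists of length n).\<close>
definition syz :: "(nat \<Rightarrow> real) \<Rightarrow> (complex \<Rightarrow> complex) list \<Rightarrow> (complex \<Rightarrow> complex) list set" where
  "syz p gs = {rs. length rs = length gs \<and> set rs \<subseteq> Ap p \<and> lincomb p rs gs = 0}"

definition tspan :: "(nat \<Rightarrow> real) \<Rightarrow> nat \<Rightarrow> (complex \<Rightarrow> complex) list list \<Rightarrow> (complex \<Rightarrow> complex) list set" where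
  "tspan p n ks = {v. length v = n \<and> (\<exists>cs. length cs = length ks \<and> set cs \<subseteq> Ap p \<and>
      (\<forall>i<n. v ! i = (\<Sum>j<length ks. Amult p (cs ! j) (ks ! j ! i))))}"

text \<open>Finitely presented: exact 0 \<rightarrow> K \<rightarrow> A(p)^n \<rightarrow> I \<rightarrow> 0 with K finitely generated.\<close>
definition fin_presented :: "(nat \<Rightarrow> real) \<Rightarrow> (complex \<Rightarrow> complex) set \<Rightarrow> bool" where
  "fin_presented p I \<longleftrightarrow> (\<exists>gs. set gs \<subseteq> Ap p \<and> I = Ap_span p gs \<and>
      (\<exists>ks. syz p gs = tspan p (length gs) ks))"

end

theory Submission imports Defs begin

lemma fun_sum_apply: "(\<Sum>i\<in>A. f i) x = (\<Sum>i\<in>A. (f i) x)"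
  by (induction A rule: infinite_finite_induct) auto

lemma Bseq_constX: "Bseq (\<lambda>n. c :: complex)"
  by (rule BseqI'[of _ "norm c"]) simp

definition Fc :: "(nat \<Rightarrow> real) \<Rightarrow> (nat \<Rightarrow> complex) \<Rightarrow> complex \<Rightarrow> complex" where
  "Fc p c = eval_fps (Abs_fps (\<lambda>n. c n / of_real (p n)))"

definition Psi :: "(nat \<Rightarrow> real) \<Rightarrow> (complex \<Rightarrow> complex) \<Rightarrow> nat \<Rightarrow> complex" where
  "Psi p f = (\<lambda>n. of_real (p n) * tcoeff f n)"

context
  fixes p :: "nat \<Rightarrow> real"
  assumes pos: "\<And>n. p n > 0"
    and lim: "filterlim (\<lambda>n. root n (p n)) at_top sequentially"
begin

lemma summ:
  fixes c :: "nat \<Rightarrow> complex"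
  assumes B: "Bseq c"
  shows "summable (\<lambda>n. norm (c n / of_real (p n) * z ^ n))"
proof -
  obtain K where K: "K > 0" "\<And>n. norm (c n) \<le> K" using B by (auto simp: Bseq_def)
  have ev: "eventually (\<lambda>n. root n (p n) \<ge> 2 * (norm z + 1) \<and> n > 0) sequentially"
    using lim eventually_gt_at_top[of 0] by (auto simp: filterlim_at_top elim!: eventually_mono
       intro: eventually_conj dest: spec[of _ "2 * (norm z + 1)"])
  have "eventually (\<lambda>n. norm (norm (c n / of_real (p n) * z ^ n)) \<le> K * (1/2) ^ n) sequentially"
    using ev
  proof eventually_elim
    case (elim n)
    have pn: "p n = root n (p n) ^ n" using elim pos[of n] by (simp add: less_imp_le)
    have "(2 * (norm z + 1)) ^ n \<le> root n (p n) ^ n"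
      by (rule power_mono) (use elim in auto)
    hence pge: "(2 * (norm z + 1)) ^ n \<le> p n" using pn by simp
    have "norm (norm (c n / of_real (p n) * z ^ n)) = norm (c n) * norm z ^ n / p n"
      using pos[of n] by (simp add: norm_mult norm_divide norm_power)
    also have "\<dots> \<le> K * norm z ^ n / (2 * (norm z + 1)) ^ n"
    proof (rule frac_le)
      show "0 \<le> K * norm z ^ n" using K(1) by simp
      show "norm (c n) * norm z ^ n \<le> K * norm z ^ n" by (rule mult_right_mono[OF K(2)]) simp
      have "0 < 2 * (norm z + 1)" by (smt (verit) norm_ge_zero)
      thus "0 < (2 * (norm z + 1)) ^ n" by (rule zero_less_power)
      show "(2 * (norm z + 1)) ^ n \<le> p n" by (rule pge)
    qed
    also have "\<dots> = K * (norm z / (2 * (norm z + 1))) ^ n" by (simp only: power_divide times_divide_eq_right)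
    also have "\<dots> \<le> K * (1/2) ^ n"
    proof -
      have d: "0 < 2 * (norm z + 1)" by (smt (verit) norm_ge_zero)
      have h: "norm z / (2 * (norm z + 1)) \<le> 1/2"
        using d by (simp add: pos_divide_le_eq algebra_simps)
      show ?thesis by (rule mult_left_mono[OF power_mono[OF h]]) (use K(1) in auto)
    qed
    finally show ?case .
  qed
  moreover have "summable (\<lambda>n. K * (1/2::real) ^ n)"
    by (intro summable_mult summable_geometric) auto
  ultimately show ?thesis by (rule summable_comparison_test_ev)
qed

lemma Fc_radius: fixes c :: "nat \<Rightarrow> complex" assumes "Bseq c" shows "fps_conv_radius (Abs_fps (\<lambda>n. c n / of_real (p n))) = \<infinity>"
  unfolding fps_conv_radius_def fps_nth_Abs_fps
  by (rule conv_radius_inftyI'', rule summable_norm_cancel, rule summ[OF assms])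

lemma Fc_apply: fixes c :: "nat \<Rightarrow> complex" shows "Fc p c z = (\<Sum>n. c n / of_real (p n) * z ^ n)"
  by (simp add: Fc_def eval_fps_def)

lemma Fc_holo: fixes c :: "nat \<Rightarrow> complex" shows "Bseq c \<Longrightarrow> Fc p c holomorphic_on UNIV"
  unfolding Fc_def by (rule holomorphic_on_eval_fps) (simp add: Fc_radius)

lemma tcoeff_Fc: fixes c :: "nat \<Rightarrow> complex" shows "Bseq c \<Longrightarrow> tcoeff (Fc p c) n = c n / of_real (p n)"
proof -
  assume "Bseq c"
  hence "fps_nth (Abs_fps (\<lambda>n. c n / of_real (p n))) n = (deriv ^^ n) (Fc p c) 0 / fact n"
    unfolding Fc_def by (intro fps_nth_conv_deriv) (simp add: Fc_radius)
  thus ?thesis by (simp add: tcoeff_def)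
qed

lemma Psi_Fc: fixes c :: "nat \<Rightarrow> complex" assumes "Bseq c" shows "Psi p (Fc p c) = c"
proof
  fix n have "p n \<noteq> 0" using pos[of n] by simp
  thus "Psi p (Fc p c) n = c n" by (simp add: Psi_def tcoeff_Fc[OF assms])
qed

lemma Fc_in_Ap: fixes c :: "nat \<Rightarrow> complex" shows "Bseq c \<Longrightarrow> Fc p c \<in> Ap p"
proof -
  assume B: "Bseq c"
  then obtain K where K: "\<And>n. norm (c n) \<le> K" by (auto simp: Bseq_def)
  have "p n * norm (tcoeff (Fc p c) n) = norm (c n)" for n
    using pos[of n] by (simp add: tcoeff_Fc[OF B] norm_divide)
  thus ?thesis using K Fc_holo[OF B] by (auto simp: Ap_def bdd_above_def)
qed

lemma Ap_Bseq: "f \<in> Ap p \<Longrightarrow> Bseq (Psi p f)"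
proof -
  assume "f \<in> Ap p"
  then obtain K where K: "\<And>n. p n * norm (tcoeff f n) \<le> K" by (auto simp: Ap_def bdd_above_def)
  show ?thesis
  proof (rule BseqI')
    fix n show "norm (Psi p f n) \<le> K" using K[of n] pos[of n]
      by (simp add: Psi_def norm_mult)
  qed
qed

lemma Ap_Fc: assumes f: "f \<in> Ap p" shows "Fc p (Psi p f) = f"
proof (rule ext)
  fix z :: complex
  have "f holomorphic_on ball 0 (norm z + 1)" using f holomorphic_on_subset[of f UNIV] by (simp add: Ap_def)
  from holomorphic_power_series[OF this, of z]
  have "(\<lambda>n. tcoeff f n * z ^ n) sums f z" by (simp add: tcoeff_def)
  moreover have "Psi p f n / of_real (p n) = tcoeff f n" for n
    using pos[of n] by (simp add: Psi_def)
  ultimately show "Fc p (Psi p f) z = f z" by (simp add: Fc_apply sums_iff)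
qed

lemma Amult_Fc: "Amult p f g = Fc p (\<lambda>n. Psi p f n * Psi p g n)"
proof -
  have "of_real (p n) * tcoeff f n * tcoeff g n * z ^ n = Psi p f n * Psi p g n / of_real (p n) * z ^ n" for n and z :: complex
  proof -
    have nz: "(of_real (p n) :: complex) \<noteq> 0" using pos[of n] by simp
    show ?thesis unfolding Psi_def using nz by simp
  qed
  thus ?thesis by (intro ext) (simp only: Amult_def Fc_apply)
qed

lemma sum_Fc: fixes c :: "_ \<Rightarrow> nat \<Rightarrow> complex" shows "(\<And>i. i \<in> A \<Longrightarrow> Bseq (c i)) \<Longrightarrow> (\<Sum>i\<in>A. Fc p (c i)) = Fc p (\<lambda>n. \<Sum>i\<in>A. c i n)"
proof
  fix z assume B: "\<And>i. i \<in> A \<Longrightarrow> Bseq (c i)"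
  have "(\<Sum>i\<in>A. Fc p (c i)) z = (\<Sum>i\<in>A. \<Sum>n. c i n / of_real (p n) * z ^ n)"
    unfolding fun_sum_apply Fc_apply ..
  also have "\<dots> = (\<Sum>n. \<Sum>i\<in>A. c i n / of_real (p n) * z ^ n)"
    by (rule suminf_sum[symmetric], rule summable_norm_cancel, rule summ, erule B)
  also have "(\<lambda>n. \<Sum>i\<in>A. c i n / of_real (p n) * z ^ n) = (\<lambda>n. (\<Sum>i\<in>A. c i n) / of_real (p n) * z ^ n)"
    by (simp only: sum_divide_distrib sum_distrib_right)
  also have "(\<Sum>n. (\<Sum>i\<in>A. c i n) / of_real (p n) * z ^ n) = Fc p (\<lambda>n. \<Sum>i\<in>A. c i n) z"
    unfolding Fc_apply ..
  finally show "(\<Sum>i\<in>A. Fc p (c i)) z = Fc p (\<lambda>n. \<Sum>i\<in>A. c i n) z" .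
qed

lemma Fc_zero: "Fc p (\<lambda>n. 0) = 0"
  by (simp add: Fc_apply fun_eq_iff)

lemma Fc_eq_zero: fixes c :: "nat \<Rightarrow> complex" assumes B: "Bseq c" and z: "Fc p c = 0" shows "c = (\<lambda>n. 0)"
proof -
  have "c = Psi p (Fc p c)" by (rule Psi_Fc[OF B, symmetric])
  also have "\<dots> = Psi p (Fc p (\<lambda>n. 0))" by (simp only: z Fc_zero)
  also have "\<dots> = (\<lambda>n. 0)" by (rule Psi_Fc) (rule Bseq_constX)
  finally show ?thesis .
qed


lemma Bseq_plus: fixes f g :: "nat \<Rightarrow> complex"
  assumes "Bseq f" "Bseq g" shows "Bseq (\<lambda>n. f n + g n)"
proof -
  obtain K where K: "\<And>n. norm (f n) \<le> K" using assms(1) by (auto simp: Bseq_def)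
  obtain L where L: "\<And>n. norm (g n) \<le> L" using assms(2) by (auto simp: Bseq_def)
  show ?thesis by (rule BseqI'[of _ "K + L"]) (rule norm_triangle_mono[OF K L])
qed

lemma Bseq_sum': fixes f :: "'b \<Rightarrow> nat \<Rightarrow> complex"
  shows "(\<And>i. i \<in> A \<Longrightarrow> Bseq (f i)) \<Longrightarrow> Bseq (\<lambda>n. \<Sum>i\<in>A. f i n)"
proof (induction A rule: infinite_finite_induct)
  case (infinite A) thus ?case by (simp add: Bseq_constX)
next
  case empty thus ?case by (simp add: Bseq_constX)
next
  case (insert x F) thus ?case by (simp add: Bseq_plus)
qed

lemma main_syz:
  assumes gs: "set gs \<subseteq> Ap p"
  shows "\<exists>ks. syz p gs = tspan p (length gs) ks"
proof -
  define m where "m = length gs"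
  define a where "a k = Psi p (gs ! k)" for k
  have aB: "Bseq (a k)" if "k < m" for k
    unfolding a_def by (rule Ap_Bseq, rule subsetD[OF gs], rule nth_mem) (use that in \<open>simp add: m_def\<close>)
  define s where "s n = (SOME i. i < m \<and> (\<forall>k<m. norm (a k n) \<le> norm (a i n)))" for n
  have s: "s n < m \<and> (\<forall>k<m. norm (a k n) \<le> norm (a (s n) n))" if "0 < m" for n
  proof -
    have "\<exists>i. i < m \<and> (\<forall>k<m. norm (a k n) \<le> norm (a i n))"
    proof -
      let ?S = "(\<lambda>k. norm (a k n)) ` {..<m}"
      have fin: "finite ?S" by simp
      have ne: "?S \<noteq> {}" using that by auto
      have "Max ?S \<in> ?S" by (rule Max_in[OF fin ne])
      then obtain i where i: "i < m" "norm (a i n) = Max ?S" by auto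
      have "\<forall>k<m. norm (a k n) \<le> Max ?S" using fin by auto
      thus ?thesis using i by (intro exI[of _ i]) simp
    qed
    thus ?thesis unfolding s_def by (rule someI_ex)
  qed
  have ratio: "norm (a j n / a (s n) n) \<le> 1" if "j < m" for j n
  proof (cases "a (s n) n = 0")
    case True thus ?thesis by simp
  next
    case False
    have "norm (a j n) \<le> norm (a (s n) n)" using s[of n] that by auto
    thus ?thesis using False by (simp add: norm_divide divide_le_eq_1)
  qed
  have azero: "a j n = 0" if "j < m" "a (s n) n = 0" for j n
  proof -
    have "norm (a j n) \<le> norm (a (s n) n)" using s[of n] that by auto
    thus ?thesis using that(2) by simp
  qed
  define w where "w j k n = (if k = j then 1 else 0) - (if k = s n then a j n / a (s n) n else 0)" for j k n
  have wB: "Bseq (w j k)" if "j < m" for j k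
  proof (rule BseqI'[of _ "1 + 1"])
    fix n
    have "norm (w j k n) \<le> norm (if k = j then 1 else 0 :: complex) + norm (if k = s n then a j n / a (s n) n else 0)"
      unfolding w_def by (rule norm_triangle_ineq4)
    also have "\<dots> \<le> 1 + 1"
      by (intro add_mono) (use ratio[OF that, of n] in auto)
    finally show "norm (w j k n) \<le> 1 + 1" .
  qed
  have wsyz: "(\<Sum>k<m. w j k n * a k n) = 0" if "j < m" for j n
  proof -
    have sn: "s n < m" using s that by auto
    have "(\<Sum>k<m. w j k n * a k n) = (\<Sum>k<m. (if k = j then a k n else 0) - (if k = s n then a j n / a (s n) n * a k n else 0))"
      by (intro sum.cong refl) (simp add: w_def left_diff_distrib)
    also have "\<dots> = (\<Sum>k<m. (if k = j then a k n else 0)) - (\<Sum>k<m. (if k = s n then a j n / a (s n) n * a k n else 0))"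
      by (rule sum_subtractf)
    also have "\<dots> = a j n - a j n / a (s n) n * a (s n) n"
      using that sn by (simp add: sum.delta)
    also have "\<dots> = 0"
      by (cases "a (s n) n = 0") (use azero[OF that] in auto)
    finally show ?thesis .
  qed
  have wspan: "(\<Sum>j<m. r j * w j i n) = r i" if "i < m" and r: "(\<Sum>j<m. r j * a j n) = 0" for i n r
  proof -
    have "(\<Sum>j<m. r j * w j i n) = (\<Sum>j<m. (if i = j then r j else 0) - (if i = s n then r j * a j n / a (s n) n else 0))"
      by (intro sum.cong refl) (simp add: w_def right_diff_distrib)
    also have "\<dots> = (\<Sum>j<m. (if i = j then r j else 0)) - (\<Sum>j<m. (if i = s n then r j * a j n / a (s n) n else 0))"
      by (rule sum_subtractf)
    finally have A: "(\<Sum>j<m. r j * w j i n) = (\<Sum>j<m. (if i = j then r j else 0)) - (\<Sum>j<m. (if i = s n then r j * a j n / a (s n) n else 0))" .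
    have e1: "(\<Sum>j<m. (if i = s n then r j * a j n / a (s n) n else 0)) = 0"
      using r by (cases "i = s n") (simp_all add: sum_divide_distrib[symmetric])
    have e2: "(\<Sum>j<m. (if i = j then r j else 0)) = r i" using that by simp
    show ?thesis unfolding A e1 e2 by simp
  qed
  define ks where "ks = map (\<lambda>j. map (\<lambda>k. Fc p (w j k)) [0..<m]) [0..<m]"
  have ksl: "length ks = m" unfolding ks_def by simp
  have ksn: "ks ! j ! k = Fc p (w j k)" if "j < m" "k < m" for j k
    unfolding ks_def using that by simp
  have lc: "lincomb p rs gs = Fc p (\<lambda>n. \<Sum>k<m. Psi p (rs ! k) n * a k n)"
    if "length rs = m" "set rs \<subseteq> Ap p" for rs
  proof -
    have "lincomb p rs gs = (\<Sum>k<m. Fc p (\<lambda>n. Psi p (rs ! k) n * a k n))"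
      unfolding lincomb_def m_def[symmetric] a_def Amult_Fc ..
    also have "\<dots> = Fc p (\<lambda>n. \<Sum>k<m. Psi p (rs ! k) n * a k n)"
    proof (rule sum_Fc)
      fix k assume "k \<in> {..<m}"
      hence k: "k < m" by simp
      have "rs ! k \<in> Ap p" using subsetD[OF that(2) nth_mem[of k rs]] k that(1) by simp
      thus "Bseq (\<lambda>n. Psi p (rs ! k) n * a k n)" by (intro Bseq_mult Ap_Bseq aB k)
    qed
    finally show ?thesis .
  qed
  have amf: "Amult p f (Fc p c) = Fc p (\<lambda>n. Psi p f n * c n)" if "Bseq c" for f c
    by (simp only: Amult_Fc Psi_Fc[OF that])
  have "syz p gs = tspan p m ks"
  proof (rule set_eqI, rule iffI)
    fix v assume "v \<in> syz p gs"
    hence vl: "length v = m" and vA: "set v \<subseteq> Ap p" and v0: "lincomb p v gs = 0"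
      unfolding syz_def m_def by auto
    define r where "r k = Psi p (v ! k)" for k
    have vk: "v ! k \<in> Ap p" if "k < m" for k using subsetD[OF vA nth_mem[of k v]] vl that by simp
    have rB: "Bseq (r k)" if "k < m" for k unfolding r_def by (rule Ap_Bseq[OF vk[OF that]])
    have "Fc p (\<lambda>n. \<Sum>k<m. r k n * a k n) = 0" using v0 lc[OF vl vA] unfolding r_def by simp
    moreover have "Bseq (\<lambda>n. \<Sum>k<m. r k n * a k n)"
      by (rule Bseq_sum') (intro Bseq_mult rB aB, simp_all)
    ultimately have sig: "(\<lambda>n. \<Sum>k<m. r k n * a k n) = (\<lambda>n. 0)" by (intro Fc_eq_zero)
    have "\<forall>i<m. v ! i = (\<Sum>j<length ks. Amult p (v ! j) (ks ! j ! i))"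
    proof (intro allI impI)
      fix i assume i: "i < m"
      have "(\<Sum>j<length ks. Amult p (v ! j) (ks ! j ! i)) = (\<Sum>j<m. Fc p (\<lambda>n. r j n * w j i n))"
        unfolding ksl by (intro sum.cong refl) (simp add: ksn i amf wB r_def)
      also have "\<dots> = Fc p (\<lambda>n. \<Sum>j<m. r j n * w j i n)"
        by (rule sum_Fc) (intro Bseq_mult rB wB, simp_all)
      also have "(\<lambda>n. \<Sum>j<m. r j n * w j i n) = r i"
      proof
        fix n
        have "(\<Sum>k<m. r k n * a k n) = 0" using sig by meson
        thus "(\<Sum>j<m. r j n * w j i n) = r i n" by (rule wspan[OF i])
      qed
      also have "Fc p (r i) = v ! i" unfolding r_def by (rule Ap_Fc[OF vk[OF i]])
      finally show "v ! i = (\<Sum>j<length ks. Amult p (v ! j) (ks ! j ! i))" by simp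
    qed
    hence "\<exists>cs. length cs = length ks \<and> set cs \<subseteq> Ap p \<and> (\<forall>i<m. v ! i = (\<Sum>j<length ks. Amult p (cs ! j) (ks ! j ! i)))"
      using vl vA ksl by (intro exI[of _ v]) simp
    thus "v \<in> tspan p m ks" unfolding tspan_def using vl by simp
  next
    fix v assume "v \<in> tspan p m ks"
    hence vl: "length v = m" and "\<exists>cs. length cs = length ks \<and> set cs \<subseteq> Ap p \<and>
      (\<forall>i<m. v ! i = (\<Sum>j<length ks. Amult p (cs ! j) (ks ! j ! i)))"
      unfolding tspan_def by simp_all
    then obtain cs where csl0: "length cs = length ks" and csA: "set cs \<subseteq> Ap p"
      and vi0: "\<forall>i<m. v ! i = (\<Sum>j<length ks. Amult p (cs ! j) (ks ! j ! i))"
      by blast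
    have csl: "length cs = m" using csl0 ksl by simp
    have vi: "v ! i = (\<Sum>j<length ks. Amult p (cs ! j) (ks ! j ! i))" if "i < m" for i
      using vi0 that by blast
    define r where "r k = Psi p (cs ! k)" for k
    have ck: "cs ! k \<in> Ap p" if "k < m" for k using subsetD[OF csA nth_mem[of k cs]] csl that by simp
    have rB: "Bseq (r k)" if "k < m" for k unfolding r_def by (rule Ap_Bseq[OF ck[OF that]])
    define t where "t i n = (\<Sum>j<m. r j n * w j i n)" for i n
    have tB: "Bseq (t i)" for i unfolding t_def
      by (rule Bseq_sum') (intro Bseq_mult rB wB, simp_all)
    have vt: "v ! i = Fc p (t i)" if i: "i < m" for i
    proof -
      have "v ! i = (\<Sum>j<m. Fc p (\<lambda>n. r j n * w j i n))"
        unfolding vi[OF i] ksl by (intro sum.cong refl) (simp add: ksn i amf wB r_def)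
      also have "\<dots> = Fc p (t i)" unfolding t_def
        by (rule sum_Fc) (intro Bseq_mult rB wB, simp_all)
      finally show ?thesis .
    qed
    have vA: "set v \<subseteq> Ap p"
    proof
      fix x assume "x \<in> set v"
      then obtain i where i: "i < m" and x: "x = v ! i" using vl by (auto simp: in_set_conv_nth)
      show "x \<in> Ap p" unfolding x vt[OF i] by (rule Fc_in_Ap[OF tB])
    qed
    have "lincomb p v gs = Fc p (\<lambda>n. \<Sum>k<m. Psi p (v ! k) n * a k n)" by (rule lc[OF vl vA])
    also have "(\<lambda>n. \<Sum>k<m. Psi p (v ! k) n * a k n) = (\<lambda>n. \<Sum>k<m. t k n * a k n)"
      by (intro ext sum.cong refl) (simp add: vt Psi_Fc tB)
    also have "(\<lambda>n. \<Sum>k<m. t k n * a k n) = (\<lambda>n. 0)"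
    proof
      fix n
      have "(\<Sum>k<m. t k n * a k n) = (\<Sum>k<m. \<Sum>j<m. r j n * (w j k n * a k n))"
        unfolding t_def by (simp add: sum_distrib_right mult.assoc)
      also have "\<dots> = (\<Sum>j<m. r j n * (\<Sum>k<m. w j k n * a k n))"
        by (subst sum.swap) (simp add: sum_distrib_left)
      also have "\<dots> = 0" by (intro sum.neutral ballI) (simp add: wsyz)
      finally show "(\<Sum>k<m. t k n * a k n) = 0" .
    qed
    also have "Fc p (\<lambda>n. 0) = 0" by (rule Fc_zero)
    finally have "lincomb p v gs = 0" .
    thus "v \<in> syz p gs" unfolding syz_def m_def[symmetric] using vl vA by auto
  qed
  thus ?thesis unfolding m_def by blast
qed

end

theorem mainTheorem15:
  fixes p :: "nat \<Rightarrow> real"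
  assumes "\<And>n. p n > 0"
    and "filterlim (\<lambda>n. root n (p n)) at_top sequentially"
  shows "\<forall>I. fg_ideal p I \<longrightarrow> fin_presented p I"
proof (intro allI impI)
  fix I assume "fg_ideal p I"
  then obtain gs where gs: "set gs \<subseteq> Ap p" "I = Ap_span p gs" unfolding fg_ideal_def by blast
  from main_syz[OF assms gs(1)] show "fin_presented p I"
    unfolding fin_presented_def using gs by blast
qed

end
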